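(* Let $f\in\mathcal{H}$ be strongly non-polynomial with $f(t)\gg t^\delta$ for some $\delta>0$. Then: (i) the class $S(f,k)$ is non-empty for all sufficiently large $k$; (ii) for every $0<c<1$ sufficiently close to $1$, there exists $k_0\in\mathbb{N}$ such that the function $t\mapsto t^c$ belongs to $S(f,k_0)$; (iii) the class $S(f,k)$ does not contain all functions $t\mapsto t^c$ with $c$ sufficiently close to $1$ (i.e. there is no $c_0<1$ such that $t^c\in S(f,k)$ for all $c\in(c_0,1)$).
   Context: $\mathcal{H}$ is a fixed Hardy field (subfield of germs at $+\infty$ of real functions, closed under differentiation) containing the logarithmico-exponential functions, closed under composition and compositional inversion. $f$ is strongly non-polynomial if $t^d\prec f(t)\prec t^{d+1}$ for some integer $d\ge0$, where $f\prec g$ means $f/g\to0$; $f\gg g$ means $|g(t)|\le C|f(t)|$ eventually. For $k$ large enough that $f^{(k)}(t)\to0$, $S(f,k)=\{g\in\mathcal{H}:\ |f^{(k)}(t)|^{-1/k}\preceq g(t)\prec|f^{(k+1)}(t)|^{-1/(k+1)}\}$, where $u\preceq v$ means $\lim_{t\to\infty}|v(t)/u(t)|$ is non-zero (possibly infinite). *)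

theory Defs
  imports "HOL-Analysis.Analysis"
begin

text \<open>Germs at +infinity are represented by functions real => real; all notions
below only depend on the behaviour eventually (filter at_top).\<close>

inductive_set le_functions :: "(real \<Rightarrow> real) set" where
  le_const: "(\<lambda>_. c) \<in> le_functions"
| le_ident: "(\<lambda>x. x) \<in> le_functions"
| le_add: "f \<in> le_functions \<Longrightarrow> g \<in> le_functions \<Longrightarrow> (\<lambda>x. f x + g x) \<in> le_functions"
| le_mult: "f \<in> le_functions \<Longrightarrow> g \<in> le_functions \<Longrightarrow> (\<lambda>x. f x * g x) \<in> le_functions"
| le_minus: "f \<in> le_functions \<Longrightarrow> (\<lambda>x. - f x) \<in> le_functions"
| le_inverse: "f \<in> le_functions \<Longrightarrow> eventually (\<lambda>x. f x \<noteq> 0) at_top \<Longrightarrow> (\<lambda>x. 1 / f x) \<in> le_functions"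
| le_exp: "f \<in> le_functions \<Longrightarrow> (\<lambda>x. exp (f x)) \<in> le_functions"
| le_ln: "f \<in> le_functions \<Longrightarrow> eventually (\<lambda>x. f x > 0) at_top \<Longrightarrow> (\<lambda>x. ln (f x)) \<in> le_functions"
| le_germ: "f \<in> le_functions \<Longrightarrow> eventually (\<lambda>x. f x = g x) at_top \<Longrightarrow> g \<in> le_functions"

definition hardy_field :: "(real \<Rightarrow> real) set \<Rightarrow> bool" where
  "hardy_field H \<longleftrightarrow>
     (\<forall>f g. f \<in> H \<longrightarrow> eventually (\<lambda>x. f x = g x) at_top \<longrightarrow> g \<in> H) \<and>
     (\<forall>c. (\<lambda>_. c) \<in> H) \<and>
     (\<forall>f\<in>H. \<forall>g\<in>H. (\<lambda>x. f x + g x) \<in> H \<and> (\<lambda>x. f x * g x) \<in> H) \<and>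
     (\<forall>f\<in>H. (\<lambda>x. - f x) \<in> H) \<and>
     (\<forall>f\<in>H. eventually (\<lambda>x. f x = 0) at_top \<or>
              (eventually (\<lambda>x. f x \<noteq> 0) at_top \<and> (\<lambda>x. 1 / f x) \<in> H)) \<and>
     (\<forall>f\<in>H. eventually (\<lambda>x. f differentiable (at x)) at_top \<and> deriv f \<in> H)"

definition good_hardy_field :: "(real \<Rightarrow> real) set \<Rightarrow> bool" where
  "good_hardy_field H \<longleftrightarrow>
     hardy_field H \<and> le_functions \<subseteq> H \<and>
     (\<forall>f\<in>H. \<forall>g\<in>H. filterlim g at_top at_top \<longrightarrow> (\<lambda>x. f (g x)) \<in> H) \<and>
     (\<forall>g\<in>H. filterlim g at_top at_top \<longrightarrow>
        (\<exists>h\<in>H. filterlim h at_top at_top \<and> eventually (\<lambda>x. h (g x) = x) at_top))"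

definition hderiv :: "nat \<Rightarrow> (real \<Rightarrow> real) \<Rightarrow> (real \<Rightarrow> real)" where
  "hderiv k f = (deriv ^^ k) f"

definition asym_less :: "(real \<Rightarrow> real) \<Rightarrow> (real \<Rightarrow> real) \<Rightarrow> bool" where
  "asym_less f g \<longleftrightarrow> ((\<lambda>t. f t / g t) \<longlongrightarrow> 0) at_top"

definition asym_leq :: "(real \<Rightarrow> real) \<Rightarrow> (real \<Rightarrow> real) \<Rightarrow> bool" where
  "asym_leq u v \<longleftrightarrow>
     (\<exists>L>0. ((\<lambda>t. \<bar>v t / u t\<bar>) \<longlongrightarrow> L) at_top) \<or>
     filterlim (\<lambda>t. \<bar>v t / u t\<bar>) at_top at_top"

definition asym_gg :: "(real \<Rightarrow> real) \<Rightarrow> (real \<Rightarrow> real) \<Rightarrow> bool" where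
  "asym_gg f g \<longleftrightarrow> (\<exists>C. eventually (\<lambda>t. \<bar>g t\<bar> \<le> C * \<bar>f t\<bar>) at_top)"

definition strongly_non_polynomial :: "(real \<Rightarrow> real) \<Rightarrow> bool" where
  "strongly_non_polynomial f \<longleftrightarrow>
     (\<exists>d::nat. asym_less (\<lambda>t. t ^ d) f \<and> asym_less f (\<lambda>t. t ^ (d + 1)))"

text \<open>The class S(f,k) (meaningful for k with f^(k) \<rightarrow> 0; that condition is
stated explicitly where needed).\<close>
definition S_class :: "(real \<Rightarrow> real) set \<Rightarrow> (real \<Rightarrow> real) \<Rightarrow> nat \<Rightarrow> (real \<Rightarrow> real) set" where
  "S_class H f k = {g \<in> H.
     asym_leq (\<lambda>t. \<bar>hderiv k f t\<bar> powr (- 1 / real k)) g \<and>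
     asym_less g (\<lambda>t. \<bar>hderiv (k + 1) f t\<bar> powr (- 1 / real (k + 1)))}"

end

theory Submission
  imports Defs
begin

lemma ghf_D:
  assumes "good_hardy_field H"
  shows "hardy_field H" "le_functions \<subseteq> H"
    "\<forall>f\<in>H. \<forall>g\<in>H. filterlim g at_top at_top \<longrightarrow> (\<lambda>x. f (g x)) \<in> H"
  using assms unfolding good_hardy_field_def by simp_all

lemma hf_D:
  assumes "hardy_field H"
  shows "\<forall>f g. f \<in> H \<longrightarrow> eventually (\<lambda>x. f x = g x) at_top \<longrightarrow> g \<in> H"
     "\<forall>c. (\<lambda>_. c) \<in> H"
     "\<forall>f\<in>H. \<forall>g\<in>H. (\<lambda>x. f x + g x) \<in> H \<and> (\<lambda>x. f x * g x) \<in> H"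
     "\<forall>f\<in>H. (\<lambda>x. - f x) \<in> H"
     "\<forall>f\<in>H. eventually (\<lambda>x. f x = 0) at_top \<or>
              (eventually (\<lambda>x. f x \<noteq> 0) at_top \<and> (\<lambda>x. 1 / f x) \<in> H)"
     "\<forall>f\<in>H. eventually (\<lambda>x. f differentiable (at x)) at_top \<and> deriv f \<in> H"
  using assms unfolding hardy_field_def by simp_all

lemma H_cong: "good_hardy_field H \<Longrightarrow> f \<in> H \<Longrightarrow> eventually (\<lambda>x. f x = g x) at_top \<Longrightarrow> g \<in> H"
  using hf_D(1)[OF ghf_D(1)] by blast
lemma H_const: "good_hardy_field H \<Longrightarrow> (\<lambda>_. c) \<in> H"
  using hf_D(2)[OF ghf_D(1)] by blast
lemma H_add: "good_hardy_field H \<Longrightarrow> f \<in> H \<Longrightarrow> g \<in> H \<Longrightarrow> (\<lambda>x. f x + g x) \<in> H"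
  using hf_D(3)[OF ghf_D(1)] by blast
lemma H_mult: "good_hardy_field H \<Longrightarrow> f \<in> H \<Longrightarrow> g \<in> H \<Longrightarrow> (\<lambda>x. f x * g x) \<in> H"
  using hf_D(3)[OF ghf_D(1)] by blast
lemma H_minus: "good_hardy_field H \<Longrightarrow> f \<in> H \<Longrightarrow> (\<lambda>x. - f x) \<in> H"
  using hf_D(4)[OF ghf_D(1)] by blast
lemma H_zero_or: "good_hardy_field H \<Longrightarrow> f \<in> H \<Longrightarrow> eventually (\<lambda>x. f x = 0) at_top \<or>
              (eventually (\<lambda>x. f x \<noteq> 0) at_top \<and> (\<lambda>x. 1 / f x) \<in> H)"
  using hf_D(5)[OF ghf_D(1)] by blast
lemma H_diff: "good_hardy_field H \<Longrightarrow> f \<in> H \<Longrightarrow> eventually (\<lambda>x. f differentiable (at x)) at_top \<and> deriv f \<in> H"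
  using hf_D(6)[OF ghf_D(1)] by blast
lemma H_le: "good_hardy_field H \<Longrightarrow> g \<in> le_functions \<Longrightarrow> g \<in> H"
  using ghf_D(2) by blast
lemma H_comp: "good_hardy_field H \<Longrightarrow> f \<in> H \<Longrightarrow> g \<in> H \<Longrightarrow> filterlim g at_top at_top \<Longrightarrow> (\<lambda>x. f (g x)) \<in> H"
  using ghf_D(3) by blast

lemma H_inv:
  assumes H: "good_hardy_field H" and f: "f \<in> H" and nz: "eventually (\<lambda>x. f x \<noteq> 0) at_top"
  shows "(\<lambda>x. 1 / f x) \<in> H"
proof -
  have "\<not> eventually (\<lambda>x. f x = 0) at_top"
  proof
    assume "eventually (\<lambda>x. f x = 0) at_top"
    from eventually_conj[OF nz this] have "eventually (\<lambda>x. False) at_top" by (auto elim: eventually_mono)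
    then show False using trivial_limit_at_top_linorder eventually_False by blast
  qed
  then show ?thesis using H_zero_or[OF H f] by blast
qed

lemma H_ident: "good_hardy_field H \<Longrightarrow> (\<lambda>x. x) \<in> H"
  using H_le le_ident by blast

lemma le_powr: "(\<lambda>x. x powr c) \<in> le_functions"
proof -
  have "(\<lambda>x. exp ((\<lambda>_. c) x * ln x)) \<in> le_functions"
    by (intro le_exp le_mult le_const le_ln le_ident) (simp add: eventually_gt_at_top)
  moreover have "eventually (\<lambda>x. exp ((\<lambda>_. c) x * ln x) = x powr c) at_top"
    using eventually_gt_at_top[of 0] by eventually_elim (simp add: powr_def)
  ultimately show ?thesis by (rule le_germ)
qed

lemma H_powr: "good_hardy_field H \<Longrightarrow> (\<lambda>x. x powr c) \<in> H"
  using H_le le_powr by blast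

lemma H_divide:
  assumes H: "good_hardy_field H" and "f \<in> H" "g \<in> H" "eventually (\<lambda>x. g x \<noteq> 0) at_top"
  shows "(\<lambda>x. f x / g x) \<in> H"
  using H_mult[OF H assms(2) H_inv[OF H assms(3,4)]] by simp

lemma hderiv_Suc: "hderiv (Suc m) f = deriv (hderiv m f)"
  by (simp add: hderiv_def)

lemma hderiv_0: "hderiv 0 f = f"
  by (simp add: hderiv_def)

lemma H_hderiv: "good_hardy_field H \<Longrightarrow> f \<in> H \<Longrightarrow> hderiv m f \<in> H"
  by (induction m) (auto simp: hderiv_0 hderiv_Suc dest: H_diff)

lemma H_DERIV: "good_hardy_field H \<Longrightarrow> f \<in> H \<Longrightarrow> eventually (\<lambda>x. DERIV f x :> deriv f x) at_top"
  using H_diff[of H f] by (auto elim: eventually_mono simp: DERIV_deriv_iff_real_differentiable)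

lemma H_isCont: "good_hardy_field H \<Longrightarrow> f \<in> H \<Longrightarrow> eventually (\<lambda>x. isCont f x) at_top"
  using H_diff[of H f] by (auto elim: eventually_mono simp: differentiable_imp_continuous_within)

lemma H_sign:
  assumes H: "good_hardy_field H" and f: "f \<in> H"
  shows "eventually (\<lambda>x. f x = 0) at_top \<or> eventually (\<lambda>x. f x > 0) at_top \<or> eventually (\<lambda>x. f x < 0) at_top"
proof (cases "eventually (\<lambda>x. f x = 0) at_top")
  case False
  then have "eventually (\<lambda>x. f x \<noteq> 0) at_top" using H_zero_or[OF H f] by blast
  moreover note H_isCont[OF H f]
  ultimately have "eventually (\<lambda>x. f x \<noteq> 0 \<and> isCont f x) at_top" by (rule eventually_conj)
  then obtain T where T: "\<And>x. x \<ge> T \<Longrightarrow> f x \<noteq> 0 \<and> isCont f x"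
    unfolding eventually_at_top_linorder by blast
  show ?thesis
  proof (cases "f T > 0")
    case True
    have "\<forall>x\<ge>T. f x > 0"
    proof (intro allI impI, rule ccontr)
      fix x assume x: "x \<ge> T" "\<not> f x > 0"
      then have "f x \<le> 0" by simp
      from IVT2[of f x 0 T, OF this _ x(1)] True T
      obtain z where "z \<ge> T" "z \<le> x" "f z = 0" by force
      with T show False by blast
    qed
    then show ?thesis by (auto simp: eventually_at_top_linorder)
  next
    case False
    then have FT: "f T < 0" using T[of T] by force
    have "\<forall>x\<ge>T. f x < 0"
    proof (intro allI impI, rule ccontr)
      fix x assume x: "x \<ge> T" "\<not> f x < 0"
      then have "f x \<ge> 0" by simp
      from IVT[of f T 0 x, OF _ this x(1)] FT T
      obtain z where "z \<ge> T" "z \<le> x" "f z = 0" by force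
      with T show False by blast
    qed
    then show ?thesis by (auto simp: eventually_at_top_linorder)
  qed
qed simp

lemma mono_lim:
  fixes h :: "real \<Rightarrow> real"
  assumes mono: "\<And>x y. T \<le> x \<Longrightarrow> x \<le> y \<Longrightarrow> h x \<le> h y"
  shows "(\<exists>L. (h \<longlongrightarrow> L) at_top) \<or> filterlim h at_top at_top"
proof (cases "\<exists>B. \<forall>x\<ge>T. h x \<le> B")
  case True
  then obtain B where B: "\<And>x. x \<ge> T \<Longrightarrow> h x \<le> B" by blast
  define L where "L = Sup (h ` {T..})"
  have ne: "h ` {T..} \<noteq> {}" by auto
  have bdd: "bdd_above (h ` {T..})" using B by (auto intro!: bdd_aboveI)
  have "(h \<longlongrightarrow> L) at_top"
  proof (rule order_tendstoI)
    fix a assume "a < L"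
    then obtain y where y: "y \<in> h ` {T..}" "a < y" using less_cSup_iff[OF ne bdd] L_def by auto
    then obtain x0 where x0: "x0 \<ge> T" "a < h x0" by auto
    show "eventually (\<lambda>x. a < h x) at_top"
      unfolding eventually_at_top_linorder
      using x0 mono by (intro exI[of _ x0]) (auto intro: less_le_trans)
  next
    fix a assume "L < a"
    have "\<forall>x\<ge>T. h x \<le> L" unfolding L_def using bdd by (auto intro: cSup_upper)
    then show "eventually (\<lambda>x. h x < a) at_top"
      unfolding eventually_at_top_linorder using \<open>L < a\<close> by (intro exI[of _ T]) force
  qed
  then show ?thesis by blast
next
  case False
  have "filterlim h at_top at_top"
    unfolding filterlim_at_top
  proof (intro allI)
    fix Z :: real
    from False obtain x0 where "x0 \<ge> T" "h x0 > Z" by (meson not_le)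
    then show "eventually (\<lambda>x. Z \<le> h x) at_top"
      unfolding eventually_at_top_linorder using mono
      by (intro exI[of _ x0]) (meson less_le_trans order.strict_implies_order)
  qed
  then show ?thesis by blast
qed

lemma H_lim:
  assumes H: "good_hardy_field H" and f: "f \<in> H"
  shows "(\<exists>L. (f \<longlongrightarrow> L) at_top) \<or> filterlim f at_top at_top \<or> filterlim f at_bot at_top"
proof -
  have df: "deriv f \<in> H" using H_diff[OF H f] by blast
  note D = H_DERIV[OF H f]
  consider "eventually (\<lambda>x. deriv f x \<ge> 0) at_top" | "eventually (\<lambda>x. deriv f x \<le> 0) at_top"
  proof -
    from H_sign[OF H df] have "eventually (\<lambda>x. deriv f x \<ge> 0) at_top \<or> eventually (\<lambda>x. deriv f x \<le> 0) at_top"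
    proof (elim disjE)
      assume "eventually (\<lambda>x. deriv f x = 0) at_top" then show ?thesis by (intro disjI1) (auto elim: eventually_mono)
    next
      assume "eventually (\<lambda>x. deriv f x > 0) at_top" then show ?thesis by (intro disjI1) (auto elim: eventually_mono)
    next
      assume "eventually (\<lambda>x. deriv f x < 0) at_top" then show ?thesis by (intro disjI2) (auto elim: eventually_mono)
    qed
    then show thesis using that by blast
  qed
  then show ?thesis
  proof cases
    case 1
    with D have "eventually (\<lambda>x. DERIV f x :> deriv f x \<and> deriv f x \<ge> 0) at_top"
      by (rule eventually_conj)
    then obtain T where T: "\<And>x. x \<ge> T \<Longrightarrow> DERIV f x :> deriv f x \<and> deriv f x \<ge> 0"
      unfolding eventually_at_top_linorder by blast
    have "f x \<le> f y" if "T \<le> x" "x \<le> y" for x y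
    proof (rule DERIV_nonneg_imp_nondecreasing[OF that(2)])
      fix z assume "x \<le> z" "z \<le> y" then have "T \<le> z" using that by linarith
      then show "\<exists>y. DERIV f z :> y \<and> y \<ge> 0" using T[of z] by blast
    qed
    then show ?thesis using mono_lim[of T f] by blast
  next
    case 2
    with D have "eventually (\<lambda>x. DERIV f x :> deriv f x \<and> deriv f x \<le> 0) at_top"
      by (rule eventually_conj)
    then obtain T where T: "\<And>x. x \<ge> T \<Longrightarrow> DERIV f x :> deriv f x \<and> deriv f x \<le> 0"
      unfolding eventually_at_top_linorder by blast
    have "- f x \<le> - f y" if "T \<le> x" "x \<le> y" for x y
    proof -
      have "f y \<le> f x"
      proof (rule DERIV_nonpos_imp_nonincreasing[OF that(2)])
        fix z assume "x \<le> z" "z \<le> y" then have "T \<le> z" using that by linarith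
        then show "\<exists>y. DERIV f z :> y \<and> y \<le> 0" using T[of z] by blast
      qed
      then show ?thesis by simp
    qed
    then have "(\<exists>L. ((\<lambda>x. - f x) \<longlongrightarrow> L) at_top) \<or> filterlim (\<lambda>x. - f x) at_top at_top"
      using mono_lim[of T "\<lambda>x. - f x"] by blast
    then show ?thesis
    proof
      assume "\<exists>L. ((\<lambda>x. - f x) \<longlongrightarrow> L) at_top"
      then obtain L where "((\<lambda>x. - f x) \<longlongrightarrow> L) at_top" by blast
      then have "((\<lambda>x. - (- f x)) \<longlongrightarrow> - L) at_top" by (rule tendsto_minus)
      then show ?thesis by auto
    next
      assume "filterlim (\<lambda>x. - f x) at_top at_top"
      from filterlim_uminus_at_top[THEN iffD1, OF this] have "filterlim f at_bot at_top" by simp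
      then show ?thesis by blast
    qed
  qed
qed


lemma ln_abs_deriv:
  fixes h :: "real \<Rightarrow> real"
  assumes nz: "h x \<noteq> 0" and D: "DERIV h x :> d"
  shows "DERIV (\<lambda>y. ln \<bar>h y\<bar>) x :> d / h x"
proof -
  have eq: "(\<lambda>y. ln \<bar>h y\<bar>) = (\<lambda>y. ln (h y * h y) / 2)"
  proof
    fix y
    show "ln \<bar>h y\<bar> = ln (h y * h y) / 2"
      by (cases "h y = 0") (simp_all add: ln_mult abs_raw_ln[symmetric] ln_minus)
  qed
  have pos: "h x * h x > 0" using nz not_real_square_gt_zero by blast
  have d1: "DERIV (\<lambda>y. h y * h y) x :> d * h x + d * h x" using DERIV_mult[OF D D] .
  have d2: "DERIV (\<lambda>y. ln (h y * h y)) x :> inverse (h x * h x) * (d * h x + d * h x)"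
    using DERIV_chain2[OF DERIV_ln[OF pos] d1] .
  have "DERIV (\<lambda>y. ln (h y * h y) / 2) x :> (inverse (h x * h x) * (d * h x + d * h x)) / 2"
    using DERIV_cdivide[OF d2] .
  also have "(inverse (h x * h x) * (d * h x + d * h x)) / 2 = d / h x"
    using nz by (simp add: field_simps)
  finally show ?thesis unfolding eq .
qed

lemma ev_ln_ge:
  fixes C e :: real
  assumes "e > 0" shows "eventually (\<lambda>t. C \<le> e * ln t) at_top"
proof -
  have "eventually (\<lambda>t. C / e \<le> ln t) at_top"
    using ln_at_top unfolding filterlim_at_top by blast
  then show ?thesis by eventually_elim (use assms in \<open>simp add: pos_divide_le_eq mult.commute\<close>)
qed

lemma T3up:
  fixes h h' :: "real \<Rightarrow> real"
  assumes ev: "eventually (\<lambda>t. h t \<noteq> 0 \<and> DERIV h t :> h' t) at_top"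
    and q: "eventually (\<lambda>t. t * h' t / h t \<le> \<beta>) at_top"
  shows "\<exists>C. eventually (\<lambda>t. ln \<bar>h t\<bar> \<le> \<beta> * ln t + C) at_top"
proof -
  have "eventually (\<lambda>t. (h t \<noteq> 0 \<and> DERIV h t :> h' t) \<and> t * h' t / h t \<le> \<beta> \<and> t > 0) at_top"
    using eventually_conj[OF ev eventually_conj[OF q eventually_gt_at_top[of 0]]] by simp
  then obtain T where T: "\<And>x. x \<ge> T \<Longrightarrow> (h x \<noteq> 0 \<and> DERIV h x :> h' x) \<and> x * h' x / h x \<le> \<beta> \<and> x > 0"
    unfolding eventually_at_top_linorder by blast
  have "ln \<bar>h x\<bar> - \<beta> * ln x \<le> ln \<bar>h T\<bar> - \<beta> * ln T" if x: "x \<ge> T" for x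
  proof (rule DERIV_nonpos_imp_nonincreasing[OF x, where f="\<lambda>x. ln \<bar>h x\<bar> - \<beta> * ln x"])
    fix z assume "T \<le> z" "z \<le> x"
    then have z: "h z \<noteq> 0" "DERIV h z :> h' z" "z * h' z / h z \<le> \<beta>" "z > 0" using T[of z] by auto
    have "DERIV (\<lambda>x. ln \<bar>h x\<bar> - \<beta> * ln x) z :> h' z / h z - \<beta> * inverse z"
      by (intro DERIV_diff DERIV_cmult ln_abs_deriv z DERIV_ln)
    moreover have "h' z / h z - \<beta> * inverse z \<le> 0"
    proof -
      have "z * (h' z / h z) \<le> \<beta>" using z(3) by simp
      then have "h' z / h z \<le> \<beta> / z" using z(4) by (simp add: pos_le_divide_eq mult.commute)
      then show ?thesis by (simp add: divide_inverse)
    qed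
    ultimately show "\<exists>y. DERIV (\<lambda>x. ln \<bar>h x\<bar> - \<beta> * ln x) z :> y \<and> y \<le> 0" by blast
  qed
  then have "\<forall>x\<ge>T. ln \<bar>h x\<bar> \<le> \<beta> * ln x + (ln \<bar>h T\<bar> - \<beta> * ln T)" by force
  then show ?thesis unfolding eventually_at_top_linorder by blast
qed

lemma T3low:
  fixes h h' :: "real \<Rightarrow> real"
  assumes ev: "eventually (\<lambda>t. h t \<noteq> 0 \<and> DERIV h t :> h' t) at_top"
    and q: "eventually (\<lambda>t. t * h' t / h t \<ge> \<beta>) at_top"
  shows "\<exists>C. eventually (\<lambda>t. ln \<bar>h t\<bar> \<ge> \<beta> * ln t - C) at_top"
proof -
  have "eventually (\<lambda>t. (h t \<noteq> 0 \<and> DERIV h t :> h' t) \<and> t * h' t / h t \<ge> \<beta> \<and> t > 0) at_top"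
    using eventually_conj[OF ev eventually_conj[OF q eventually_gt_at_top[of 0]]] by simp
  then obtain T where T: "\<And>x. x \<ge> T \<Longrightarrow> (h x \<noteq> 0 \<and> DERIV h x :> h' x) \<and> x * h' x / h x \<ge> \<beta> \<and> x > 0"
    unfolding eventually_at_top_linorder by blast
  have "ln \<bar>h T\<bar> - \<beta> * ln T \<le> ln \<bar>h x\<bar> - \<beta> * ln x" if x: "x \<ge> T" for x
  proof (rule DERIV_nonneg_imp_nondecreasing[OF x, where f="\<lambda>x. ln \<bar>h x\<bar> - \<beta> * ln x"])
    fix z assume "T \<le> z" "z \<le> x"
    then have z: "h z \<noteq> 0" "DERIV h z :> h' z" "z * h' z / h z \<ge> \<beta>" "z > 0" using T[of z] by auto
    have "DERIV (\<lambda>x. ln \<bar>h x\<bar> - \<beta> * ln x) z :> h' z / h z - \<beta> * inverse z"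
      by (intro DERIV_diff DERIV_cmult ln_abs_deriv z DERIV_ln)
    moreover have "h' z / h z - \<beta> * inverse z \<ge> 0"
    proof -
      have "z * (h' z / h z) \<ge> \<beta>" using z(3) by simp
      then have "h' z / h z \<ge> \<beta> / z" using z(4) by (simp add: pos_divide_le_eq mult.commute)
      then show ?thesis by (simp add: divide_inverse)
    qed
    ultimately show "\<exists>y. DERIV (\<lambda>x. ln \<bar>h x\<bar> - \<beta> * ln x) z :> y \<and> y \<ge> 0" by blast
  qed
  then have "\<forall>x\<ge>T. ln \<bar>h x\<bar> \<ge> \<beta> * ln x - (\<beta> * ln T - ln \<bar>h T\<bar>)" by force
  then show ?thesis unfolding eventually_at_top_linorder by blast
qed

definition pw :: "(real \<Rightarrow> real) \<Rightarrow> real \<Rightarrow> bool" where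
  "pw h b \<longleftrightarrow> (\<forall>e>0. eventually (\<lambda>t. \<bar>ln \<bar>h t\<bar> - b * ln t\<bar> \<le> e * ln t) at_top)"

lemma pwD: "pw h b \<Longrightarrow> e > 0 \<Longrightarrow> eventually (\<lambda>t. \<bar>ln \<bar>h t\<bar> - b * ln t\<bar> \<le> e * ln t) at_top"
  unfolding pw_def by blast

lemma pw_of_lim:
  fixes h h' :: "real \<Rightarrow> real"
  assumes ev: "eventually (\<lambda>t. h t \<noteq> 0 \<and> DERIV h t :> h' t) at_top"
    and lim: "((\<lambda>t. t * h' t / h t) \<longlongrightarrow> L) at_top"
  shows "pw h L"
  unfolding pw_def
proof (intro allI impI)
  fix e :: real assume e: "e > 0"
  have "eventually (\<lambda>t. t * h' t / h t < L + e/2) at_top"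
    using order_tendstoD(2)[OF lim, of "L + e/2"] e by simp
  then have "eventually (\<lambda>t. t * h' t / h t \<le> L + e/2) at_top"
    by (auto elim: eventually_mono)
  then obtain C1 where C1: "eventually (\<lambda>t. ln \<bar>h t\<bar> \<le> (L + e/2) * ln t + C1) at_top"
    using T3up[OF ev] by blast
  have "eventually (\<lambda>t. t * h' t / h t > L - e/2) at_top"
    using order_tendstoD(1)[OF lim, of "L - e/2"] e by simp
  then have "eventually (\<lambda>t. t * h' t / h t \<ge> L - e/2) at_top"
    by (auto elim: eventually_mono)
  then obtain C2 where C2: "eventually (\<lambda>t. ln \<bar>h t\<bar> \<ge> (L - e/2) * ln t - C2) at_top"
    using T3low[OF ev] by blast
  have e2: "e/2 > 0" using e by simp
  show "eventually (\<lambda>t. \<bar>ln \<bar>h t\<bar> - L * ln t\<bar> \<le> e * ln t) at_top"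
    using C1 C2 ev_ln_ge[OF e2, of C1] ev_ln_ge[OF e2, of C2]
  proof eventually_elim
    case (elim t)
    define E where "E = (e/2) * ln t"
    have r1: "(L + e/2) * ln t = L * ln t + E" unfolding E_def by (simp add: algebra_simps)
    have r2: "(L - e/2) * ln t = L * ln t - E" unfolding E_def by (simp add: algebra_simps)
    have r3: "e * ln t = 2 * E" unfolding E_def by simp
    have c1: "ln \<bar>h t\<bar> \<le> L * ln t + E + C1" using elim(1) unfolding r1 .
    have c2: "ln \<bar>h t\<bar> \<ge> L * ln t - E - C2" using elim(2) unfolding r2 .
    have c3: "C1 \<le> E" "C2 \<le> E" using elim(3,4) unfolding E_def .
    have u: "ln \<bar>h t\<bar> - L * ln t \<le> e * ln t" unfolding r3 using c1 c3 by linarith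
    have l: "L * ln t - ln \<bar>h t\<bar> \<le> e * ln t" unfolding r3 using c2 c3 by linarith
    show ?case using u l by (simp add: abs_le_iff)
  qed
qed

lemma pw_unique:
  assumes "pw h b" "pw h b'" shows "b = b'"
proof (rule ccontr)
  assume ne: "b \<noteq> b'"
  define e where "e = \<bar>b - b'\<bar> / 3"
  have e: "e > 0" using ne by (simp add: e_def)
  have "eventually (\<lambda>t. \<bar>b - b'\<bar> \<le> 2 * e + 0 * t) at_top"
    using pwD[OF assms(1) e] pwD[OF assms(2) e] eventually_gt_at_top[of 1]
  proof eventually_elim
    case (elim t)
    then have lt: "ln t > 0" by simp
    have "(b - b') * ln t = (ln \<bar>h t\<bar> - b' * ln t) - (ln \<bar>h t\<bar> - b * ln t)" by (simp add: algebra_simps)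
    then have "\<bar>(b - b') * ln t\<bar> \<le> \<bar>ln \<bar>h t\<bar> - b' * ln t\<bar> + \<bar>ln \<bar>h t\<bar> - b * ln t\<bar>" by linarith
    also have "\<dots> \<le> 2 * e * ln t" using elim(1,2) by linarith
    finally have "\<bar>b - b'\<bar> * ln t \<le> 2 * e * ln t" using lt by (simp add: abs_mult)
    then show "\<bar>b - b'\<bar> \<le> 2 * e + 0 * t" using lt by simp
  qed
  then obtain t where "\<bar>b - b'\<bar> \<le> 2 * e + 0 * t" using eventually_happens'[OF trivial_limit_at_top_linorder] by blast
  then have "\<bar>b - b'\<bar> \<le> 2 * e" by simp
  then show False using e unfolding e_def by simp
qed

lemma pw_cong:
  assumes "eventually (\<lambda>t. h1 t = h2 t) at_top" "pw h1 b" shows "pw h2 b"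
  unfolding pw_def
proof (intro allI impI)
  fix e :: real assume "e > 0"
  from pwD[OF assms(2) this] assms(1)
  show "eventually (\<lambda>t. \<bar>ln \<bar>h2 t\<bar> - b * ln t\<bar> \<le> e * ln t) at_top"
    by eventually_elim simp
qed

lemma pw_mult:
  assumes "pw h1 b1" "pw h2 b2" "eventually (\<lambda>t. h1 t \<noteq> 0) at_top" "eventually (\<lambda>t. h2 t \<noteq> 0) at_top"
  shows "pw (\<lambda>t. h1 t * h2 t) (b1 + b2)"
  unfolding pw_def
proof (intro allI impI)
  fix e :: real assume "e > 0"
  then have e2: "e/2 > 0" by simp
  from pwD[OF assms(1) e2] pwD[OF assms(2) e2] assms(3,4)
  show "eventually (\<lambda>t. \<bar>ln \<bar>h1 t * h2 t\<bar> - (b1 + b2) * ln t\<bar> \<le> e * ln t) at_top"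
  proof eventually_elim
    case (elim t)
    have eq: "ln \<bar>h1 t * h2 t\<bar> - (b1 + b2) * ln t = (ln \<bar>h1 t\<bar> - b1 * ln t) + (ln \<bar>h2 t\<bar> - b2 * ln t)"
      using elim by (simp add: abs_mult ln_mult algebra_simps)
    define E where "E = e / 2 * ln t"
    have r: "e * ln t = 2 * E" unfolding E_def by simp
    have a: "\<bar>ln \<bar>h1 t\<bar> - b1 * ln t\<bar> \<le> E" "\<bar>ln \<bar>h2 t\<bar> - b2 * ln t\<bar> \<le> E"
      using elim(1,2) unfolding E_def .
    show ?case unfolding eq r using a by linarith
  qed
qed

lemma pw_divide:
  assumes "pw h1 b1" "pw h2 b2" "eventually (\<lambda>t. h1 t \<noteq> 0) at_top" "eventually (\<lambda>t. h2 t \<noteq> 0) at_top"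
  shows "pw (\<lambda>t. h1 t / h2 t) (b1 - b2)"
  unfolding pw_def
proof (intro allI impI)
  fix e :: real assume "e > 0"
  then have e2: "e/2 > 0" by simp
  from pwD[OF assms(1) e2] pwD[OF assms(2) e2] assms(3,4)
  show "eventually (\<lambda>t. \<bar>ln \<bar>h1 t / h2 t\<bar> - (b1 - b2) * ln t\<bar> \<le> e * ln t) at_top"
  proof eventually_elim
    case (elim t)
    have eq: "ln \<bar>h1 t / h2 t\<bar> - (b1 - b2) * ln t = (ln \<bar>h1 t\<bar> - b1 * ln t) - (ln \<bar>h2 t\<bar> - b2 * ln t)"
      using elim by (simp add: ln_div algebra_simps)
    define E where "E = e / 2 * ln t"
    have r: "e * ln t = 2 * E" unfolding E_def by simp
    have a: "\<bar>ln \<bar>h1 t\<bar> - b1 * ln t\<bar> \<le> E" "\<bar>ln \<bar>h2 t\<bar> - b2 * ln t\<bar> \<le> E"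
      using elim(1,2) unfolding E_def .
    show ?case unfolding eq r using a by linarith
  qed
qed

lemma pw_powr_abs:
  assumes "pw h b"
  shows "pw (\<lambda>t. \<bar>h t\<bar> powr r) (r * b)"
  unfolding pw_def
proof (intro allI impI)
  fix e :: real assume e: "e > 0"
  define e' where "e' = e / (\<bar>r\<bar> + 1)"
  have e': "e' > 0" using e by (simp add: e'_def)
  from pwD[OF assms(1) e'] eventually_gt_at_top[of 1]
  show "eventually (\<lambda>t. \<bar>ln \<bar>\<bar>h t\<bar> powr r\<bar> - (r * b) * ln t\<bar> \<le> e * ln t) at_top"
  proof eventually_elim
    case (elim t)
    have lt: "ln t > 0" using elim by simp
    have "\<bar>ln \<bar>\<bar>h t\<bar> powr r\<bar> - (r * b) * ln t\<bar> = \<bar>r\<bar> * \<bar>ln \<bar>h t\<bar> - b * ln t\<bar>"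
      by (simp add: abs_mult[symmetric] algebra_simps)
    also have "\<dots> \<le> \<bar>r\<bar> * (e' * ln t)" using elim by (intro mult_left_mono) auto
    also have "\<dots> \<le> (\<bar>r\<bar> + 1) * (e' * ln t)" using e' lt by (intro mult_right_mono) auto
    also have "\<dots> = e * ln t" by (simp add: e'_def)
    finally show ?case .
  qed
qed

lemma pw_tpowr: "pw (\<lambda>t. t powr c) c"
  unfolding pw_def
proof (intro allI impI)
  fix e :: real assume e: "e > 0"
  from eventually_gt_at_top[of 1]
  show "eventually (\<lambda>t. \<bar>ln \<bar>t powr c\<bar> - c * ln t\<bar> \<le> e * ln t) at_top"
    by eventually_elim (use e in simp)
qed

lemma pw_lim_nz:
  assumes "(h \<longlongrightarrow> L) at_top" "L \<noteq> 0" shows "pw h 0"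
  unfolding pw_def
proof (intro allI impI)
  fix e :: real assume e: "e > 0"
  have "((\<lambda>t. ln \<bar>h t\<bar>) \<longlongrightarrow> ln \<bar>L\<bar>) at_top"
    using assms by (intro tendsto_ln tendsto_rabs) auto
  then have "((\<lambda>t. \<bar>ln \<bar>h t\<bar>\<bar>) \<longlongrightarrow> \<bar>ln \<bar>L\<bar>\<bar>) at_top" by (rule tendsto_rabs)
  then have "eventually (\<lambda>t. \<bar>ln \<bar>h t\<bar>\<bar> < \<bar>ln \<bar>L\<bar>\<bar> + 1) at_top"
    by (intro order_tendstoD) auto
  with ev_ln_ge[OF e, of "\<bar>ln \<bar>L\<bar>\<bar> + 1"]
  show "eventually (\<lambda>t. \<bar>ln \<bar>h t\<bar> - 0 * ln t\<bar> \<le> e * ln t) at_top"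
    by eventually_elim simp
qed

lemma pw_upper:
  assumes "pw h b" "e > 0" shows "eventually (\<lambda>t. \<bar>h t\<bar> \<le> t powr (b + e)) at_top"
  using pwD[OF assms] eventually_gt_at_top[of 1]
proof eventually_elim
  case (elim t)
  show ?case
  proof (cases "h t = 0")
    case False
    have "ln \<bar>h t\<bar> \<le> (b + e) * ln t" using elim by (auto simp: algebra_simps abs_le_iff)
    then have "exp (ln \<bar>h t\<bar>) \<le> exp ((b + e) * ln t)" by simp
    then show ?thesis using False elim by (simp add: powr_def)
  qed simp
qed

lemma pw_lower:
  assumes "pw h b" "e > 0" "eventually (\<lambda>t. h t \<noteq> 0) at_top"
  shows "eventually (\<lambda>t. \<bar>h t\<bar> \<ge> t powr (b - e)) at_top"
  using pwD[OF assms(1,2)] eventually_gt_at_top[of 1] assms(3)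
proof eventually_elim
  case (elim t)
  have "ln \<bar>h t\<bar> \<ge> (b - e) * ln t" using elim by (auto simp: algebra_simps abs_le_iff)
  then have "exp (ln \<bar>h t\<bar>) \<ge> exp ((b - e) * ln t)" by simp
  then show ?case using elim by (simp add: powr_def)
qed

lemma pw_to_zero:
  assumes "pw h b" "b < 0" shows "(h \<longlongrightarrow> 0) at_top"
proof -
  have e: "- b / 2 > 0" using assms by simp
  have lim: "((\<lambda>t. t powr (b / 2)) \<longlongrightarrow> 0) at_top"
    using assms by (intro tendsto_neg_powr filterlim_ident) auto
  have up: "eventually (\<lambda>t. \<bar>h t\<bar> \<le> t powr (b / 2)) at_top"
    using pw_upper[OF assms(1) e] by simp
  have "((\<lambda>t. \<bar>h t\<bar>) \<longlongrightarrow> 0) at_top"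
    by (rule tendsto_sandwich[OF _ up tendsto_const lim]) simp
  then show ?thesis by (simp add: tendsto_rabs_zero_iff)
qed

lemma pw_to_inf:
  assumes "pw h b" "b > 0" shows "filterlim (\<lambda>t. \<bar>h t\<bar>) at_top at_top"
proof -
  have e: "b / 2 > 0" using assms by simp
  have "filterlim (\<lambda>t. (b / 2) * ln t) at_top at_top"
    using e by (intro filterlim_tendsto_pos_mult_at_top[OF tendsto_const] ln_at_top)
  then have lim: "filterlim (\<lambda>t. exp ((b / 2) * ln t)) at_top at_top"
    by (rule filterlim_compose[OF exp_at_top])
  have "eventually (\<lambda>t. \<bar>ln \<bar>h t\<bar> - b * ln t\<bar> \<le> (b/2) * ln t) at_top" by (rule pwD[OF assms(1) e])
  then have "eventually (\<lambda>t. exp ((b / 2) * ln t) \<le> \<bar>h t\<bar>) at_top"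
    using eventually_gt_at_top[of 1]
  proof eventually_elim
    case (elim t)
    have lt: "ln t > 0" using elim by simp
    define E where "E = (b/2) * ln t"
    have r: "b * ln t = 2 * E" unfolding E_def by simp
    have "\<bar>ln \<bar>h t\<bar> - 2 * E\<bar> \<le> E" using elim(1) unfolding r E_def[symmetric] .
    then have "ln \<bar>h t\<bar> \<ge> E" by linarith
    then have l: "ln \<bar>h t\<bar> \<ge> (b/2) * ln t" unfolding E_def .
    have "(b/2) * ln t > 0" using lt e by simp
    then have "h t \<noteq> 0" using l by auto
    then show ?case using l by (subst ln_le_cancel_iff[symmetric]) auto
  qed
  then show ?thesis by (rule filterlim_at_top_mono[OF lim])
qed


lemma ln_abs_real: "ln \<bar>x\<bar> = ln (x::real)"
  by (simp add: abs_if ln_minus)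

lemma H_q:
  assumes H: "good_hardy_field H" and h: "h \<in> H" and nz: "eventually (\<lambda>t. h t \<noteq> 0) at_top"
  shows "(\<lambda>t. t * deriv h t / h t) \<in> H"
  using H_divide[OF H H_mult[OF H H_ident[OF H] conjunct2[OF H_diff[OF H h]]] h nz] .

lemma ev_ln_contra:
  fixes C k :: real
  assumes "k > 0" "eventually (\<lambda>t. k * ln t \<le> C) at_top" shows False
proof -
  from eventually_conj[OF ev_ln_ge[OF assms(1), of "C + 1"] assms(2)]
  obtain t where "C + 1 \<le> k * ln t" "k * ln t \<le> C"
    using eventually_happens'[OF trivial_limit_at_top_linorder] by blast
  then show False by linarith
qed

lemma q_trich:
  assumes H: "good_hardy_field H" and h: "h \<in> H" and nz: "eventually (\<lambda>t. h t \<noteq> 0) at_top"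
  shows "(\<exists>L. ((\<lambda>t. t * deriv h t / h t) \<longlongrightarrow> L) at_top \<and> pw h L)
    \<or> (\<forall>\<beta>. \<exists>C. eventually (\<lambda>t. \<beta> * ln t - C \<le> ln \<bar>h t\<bar>) at_top)
    \<or> (\<forall>\<beta>. \<exists>C. eventually (\<lambda>t. ln \<bar>h t\<bar> \<le> \<beta> * ln t + C) at_top)"
proof -
  have ev: "eventually (\<lambda>t. h t \<noteq> 0 \<and> DERIV h t :> deriv h t) at_top"
    using eventually_conj[OF nz H_DERIV[OF H h]] .
  from H_lim[OF H H_q[OF H h nz]]
  show ?thesis
  proof (elim disjE)
    assume "\<exists>L. ((\<lambda>t. t * deriv h t / h t) \<longlongrightarrow> L) at_top"
    then obtain L where L: "((\<lambda>t. t * deriv h t / h t) \<longlongrightarrow> L) at_top" by blast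
    then show ?thesis using pw_of_lim[OF ev L] by blast
  next
    assume lim: "filterlim (\<lambda>t. t * deriv h t / h t) at_top at_top"
    have "\<exists>C. eventually (\<lambda>t. \<beta> * ln t - C \<le> ln \<bar>h t\<bar>) at_top" for \<beta>
    proof -
      have "eventually (\<lambda>t. \<beta> \<le> t * deriv h t / h t) at_top"
        using lim unfolding filterlim_at_top by blast
      from T3low[OF ev this] show ?thesis by (auto simp: algebra_simps)
    qed
    then show ?thesis by blast
  next
    assume lim: "filterlim (\<lambda>t. t * deriv h t / h t) at_bot at_top"
    have "\<exists>C. eventually (\<lambda>t. ln \<bar>h t\<bar> \<le> \<beta> * ln t + C) at_top" for \<beta>
    proof -
      have "eventually (\<lambda>t. t * deriv h t / h t \<le> \<beta>) at_top"
        using lim unfolding filterlim_at_bot by blast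
      from T3up[OF ev this] show ?thesis .
    qed
    then show ?thesis by blast
  qed
qed

lemma H_abs_powr:
  assumes H: "good_hardy_field H" and h: "h \<in> H" and nz: "eventually (\<lambda>t. h t \<noteq> 0) at_top"
    and lim: "(h \<longlongrightarrow> 0) at_top"
  shows "(\<lambda>t. \<bar>h t\<bar> powr r) \<in> H"
proof -
  have hh: "(\<lambda>t. h t * h t) \<in> H" using H_mult[OF H h h] .
  have nz2: "eventually (\<lambda>t. h t * h t \<noteq> 0) at_top" using nz by (auto elim: eventually_mono)
  define w where "w = (\<lambda>t. 1 / (h t * h t))"
  have wH: "w \<in> H" unfolding w_def using H_inv[OF H hh nz2] .
  have "((\<lambda>t. h t * h t) \<longlongrightarrow> 0 * 0) at_top" using tendsto_mult[OF lim lim] .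
  then have l0: "((\<lambda>t. h t * h t) \<longlongrightarrow> 0) at_top" by simp
  have "filterlim (\<lambda>t. inverse (h t * h t)) at_top at_top"
  proof (rule filterlim_inverse_at_top[OF l0])
    show "eventually (\<lambda>t. 0 < h t * h t) at_top"
      using nz by (rule eventually_mono) (use not_real_square_gt_zero in blast)
  qed
  then have wlim: "filterlim w at_top at_top" unfolding w_def by (simp add: inverse_eq_divide)
  have "(\<lambda>t. w t powr (- r / 2)) \<in> H" using H_comp[OF H H_powr[OF H] wH wlim] .
  moreover have "eventually (\<lambda>t. w t powr (- r / 2) = \<bar>h t\<bar> powr r) at_top"
    using nz
  proof eventually_elim
    case (elim t)
    have "h t * h t > 0" using elim not_real_square_gt_zero by blast
    then have "w t > 0" unfolding w_def by simp
    moreover have "ln (w t) = - 2 * ln \<bar>h t\<bar>" unfolding w_def using elim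
      by (simp add: ln_div ln_mult ln_abs_real)
    ultimately show ?case using elim by (simp add: powr_def)
  qed
  ultimately show ?thesis by (rule H_cong[OF H])
qed

lemma hderiv_DERIV:
  assumes H: "good_hardy_field H" and f: "f \<in> H"
  shows "eventually (\<lambda>x. DERIV (hderiv m f) x :> hderiv (Suc m) f x) at_top"
  using H_DERIV[OF H H_hderiv[OF H f, of m]] by (simp add: hderiv_Suc)


lemma bounds_contra:
  fixes h :: "real \<Rightarrow> real"
  assumes "eventually (\<lambda>t. b1 * ln t - C1 \<le> ln \<bar>h t\<bar>) at_top"
    "eventually (\<lambda>t. ln \<bar>h t\<bar> \<le> b2 * ln t + C2) at_top" "b1 > b2"
  shows False
proof -
  have k: "b1 - b2 > 0" using assms(3) by simp
  have "eventually (\<lambda>t. (b1 - b2) * ln t \<le> C1 + C2) at_top"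
    using assms(1,2)
  proof eventually_elim
    case (elim t)
    have "(b1 - b2) * ln t = b1 * ln t - b2 * ln t" by (simp add: algebra_simps)
    then show ?case using elim by linarith
  qed
  then show False by (rule ev_ln_contra[OF k])
qed

lemma pw_up:
  assumes "pw h b" "e > 0"
  shows "eventually (\<lambda>t. ln \<bar>h t\<bar> \<le> (b + e) * ln t + 0) at_top"
  using pwD[OF assms]
proof eventually_elim
  case (elim t)
  have "(b + e) * ln t = b * ln t + e * ln t" by (simp add: algebra_simps)
  then show ?case using elim by (simp add: abs_le_iff)
qed

lemma pw_low:
  assumes "pw h b" "e > 0"
  shows "eventually (\<lambda>t. (b - e) * ln t - 0 \<le> ln \<bar>h t\<bar>) at_top"
  using pwD[OF assms]
proof eventually_elim
  case (elim t)
  have "(b - e) * ln t = b * ln t - e * ln t" by (simp add: algebra_simps)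
  then show ?case using elim by (simp add: abs_le_iff)
qed

lemma pw_id: "pw (\<lambda>t. t) 1"
proof -
  have "eventually (\<lambda>t::real. t powr 1 = t) at_top"
    using eventually_gt_at_top[of "0::real"] by eventually_elim (simp add: powr_one)
  from pw_cong[OF this pw_tpowr[of 1]] show ?thesis .
qed

lemma ev_abs_gt:
  fixes g :: "real \<Rightarrow> real"
  assumes "(g \<longlongrightarrow> L) at_top" "\<bar>L\<bar> > k"
  shows "eventually (\<lambda>t. \<bar>g t\<bar> > k) at_top"
  using order_tendstoD(1)[OF tendsto_rabs[OF assms(1)] assms(2)] .

lemma ev_abs_lt:
  fixes g :: "real \<Rightarrow> real"
  assumes "(g \<longlongrightarrow> L) at_top" "\<bar>L\<bar> < k"
  shows "eventually (\<lambda>t. \<bar>g t\<bar> < k) at_top"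
  using order_tendstoD(2)[OF tendsto_rabs[OF assms(1)] assms(2)] .

lemma NP:
  assumes H: "good_hardy_field H" and fH: "f \<in> H" and snp: "strongly_non_polynomial f"
    and c: "c \<noteq> 0" and lim: "(hderiv j f \<longlongrightarrow> c) at_top"
  shows False
proof -
  have chain: "i \<le> j \<Longrightarrow> ((\<lambda>t. hderiv (j - i) f t / (t ^ i / fact i)) \<longlongrightarrow> c) at_top" for i
  proof (induction i)
    case 0 then show ?case using lim by simp
  next
    case (Suc i)
    then have IH: "((\<lambda>t. hderiv (j - i) f t / (t ^ i / fact i)) \<longlongrightarrow> c) at_top" by simp
    have ji: "Suc (j - Suc i) = j - i" using Suc.prems by simp
    show ?case
    proof (rule lhospital_at_top_at_top[where g' = "\<lambda>t. t ^ i / fact i" and f' = "hderiv (j - i) f"])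
      have "filterlim (\<lambda>t::real. t ^ Suc i) at_top at_top"
        by (intro filterlim_pow_at_top filterlim_ident) simp
      then have "filterlim (\<lambda>t::real. (1 / fact (Suc i)) * t ^ Suc i) at_top at_top"
        by (intro filterlim_tendsto_pos_mult_at_top[OF tendsto_const]) auto
      then show "filterlim (\<lambda>t::real. t ^ Suc i / fact (Suc i)) at_top at_top" by simp
      show "eventually (\<lambda>t::real. t ^ i / fact i \<noteq> 0) at_top"
        using eventually_gt_at_top[of "0::real"] by eventually_elim simp
      show "eventually (\<lambda>t. DERIV (hderiv (j - Suc i) f) t :> hderiv (j - i) f t) at_top"
        using hderiv_DERIV[OF H fH, of "j - Suc i"] unfolding ji .
      have Dg: "DERIV (\<lambda>t. t ^ Suc i / fact (Suc i)) t :> t ^ i / fact i" for t :: real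
      proof -
        have "DERIV (\<lambda>t. t ^ Suc i / fact (Suc i)) t :> real (Suc i) * t ^ (Suc i - Suc 0) / fact (Suc i)"
          using DERIV_cdivide[OF DERIV_pow[of "Suc i" t]] .
        moreover have "real (Suc i) * t ^ (Suc i - Suc 0) / fact (Suc i) = (t ^ i / fact i :: real)"
          by (simp add: fact_Suc field_simps del: of_nat_Suc)
        ultimately show ?thesis by simp
      qed
      show "eventually (\<lambda>t::real. DERIV (\<lambda>t. t ^ Suc i / fact (Suc i)) t :> t ^ i / fact i) at_top"
        using Dg by simp
      show "((\<lambda>t. hderiv (j - i) f t / (t ^ i / fact i)) \<longlongrightarrow> c) at_top" by (rule IH)
    qed
  qed
  from chain[of j] have "((\<lambda>t. f t / (t ^ j / fact j)) \<longlongrightarrow> c) at_top" by (simp add: hderiv_0)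
  then have "((\<lambda>t. (f t / (t ^ j / fact j)) / fact j) \<longlongrightarrow> c / fact j) at_top"
    by (intro tendsto_divide tendsto_const) auto
  moreover have "(f t / (t ^ j / fact j)) / fact j = f t / t ^ j" for t :: real
    by (simp add: field_simps)
  ultimately have L: "((\<lambda>t. f t / t ^ j) \<longlongrightarrow> c / fact j) at_top" by simp
  define c' where "c' = c / fact j"
  have c': "c' \<noteq> 0" using c by (simp add: c'_def)
  from snp obtain d where d1: "asym_less (\<lambda>t. t ^ d) f" and d2: "asym_less f (\<lambda>t. t ^ (d + 1))"
    unfolding strongly_non_polynomial_def by blast
  show False
  proof (cases "j \<le> d")
    case True
    have "((\<lambda>t. inverse (f t / t ^ j)) \<longlongrightarrow> inverse c') at_top"
      using tendsto_inverse[OF L[folded c'_def] c'] .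
    then have inv: "((\<lambda>t. t ^ j / f t) \<longlongrightarrow> inverse c') at_top" by simp
    have k: "\<bar>inverse c'\<bar> / 2 > 0" using c' by simp
    have e1: "eventually (\<lambda>t. \<bar>t ^ j / f t\<bar> > \<bar>inverse c'\<bar> / 2) at_top"
      using ev_abs_gt[OF inv, of "\<bar>inverse c'\<bar> / 2"] k by simp
    have e2: "eventually (\<lambda>t. \<bar>t ^ d / f t\<bar> < \<bar>inverse c'\<bar> / 2) at_top"
      using ev_abs_lt[OF d1[unfolded asym_less_def], of "\<bar>inverse c'\<bar> / 2"] k by simp
    have "eventually (\<lambda>t::real. False) at_top"
      using e1 e2 eventually_ge_at_top[of "1::real"]
    proof eventually_elim
      case (elim t)
      have "t ^ j \<le> t ^ d" using elim(3) True by (intro power_increasing) auto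
      then have "\<bar>t ^ j / f t\<bar> \<le> \<bar>t ^ d / f t\<bar>" using elim(3)
        by (simp add: abs_divide divide_right_mono)
      then show False using elim by linarith
    qed
    then show False by simp
  next
    case False
    have k: "\<bar>c'\<bar> / 2 > 0" using c' by simp
    have e1: "eventually (\<lambda>t. \<bar>f t / t ^ j\<bar> > \<bar>c'\<bar> / 2) at_top"
      using ev_abs_gt[OF L[folded c'_def], of "\<bar>c'\<bar> / 2"] k by simp
    have e2: "eventually (\<lambda>t. \<bar>f t / t ^ (d + 1)\<bar> < \<bar>c'\<bar> / 2) at_top"
      using ev_abs_lt[OF d2[unfolded asym_less_def], of "\<bar>c'\<bar> / 2"] k by simp
    have "eventually (\<lambda>t::real. False) at_top"
      using e1 e2 eventually_ge_at_top[of "1::real"]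
    proof eventually_elim
      case (elim t)
      have "t ^ (d + 1) \<le> t ^ j" using elim(3) False by (intro power_increasing) auto
      moreover have "t ^ (d + 1) > 0" using elim(3) by simp
      ultimately have "\<bar>f t\<bar> / t ^ j \<le> \<bar>f t\<bar> / t ^ (d + 1)"
        by (intro divide_left_mono) auto
      then have "\<bar>f t / t ^ j\<bar> \<le> \<bar>f t / t ^ (d + 1)\<bar>" using elim(3)
        by (simp add: abs_divide)
      then show False using elim by linarith
    qed
    then show False by simp
  qed
qed


lemma BAD:
  fixes g g' :: "real \<Rightarrow> real"
  assumes H: "good_hardy_field H" and gH: "g \<in> H"
    and D: "eventually (\<lambda>x. DERIV g x :> g' x) at_top"
    and \<beta>: "\<beta> < -1" and bnd: "eventually (\<lambda>t. ln \<bar>g' t\<bar> \<le> \<beta> * ln t + C) at_top"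
    and pw0: "pw g 0" and nz: "eventually (\<lambda>t. g t \<noteq> 0) at_top"
  shows "\<exists>c. c \<noteq> 0 \<and> (g \<longlongrightarrow> c) at_top"
proof -
  define M where "M = exp C"
  define \<gamma> where "\<gamma> = \<beta> + 1"
  define K where "K = M / (- \<gamma>)"
  have M: "M > 0" by (simp add: M_def)
  have \<gamma>: "\<gamma> < 0" using \<beta> by (simp add: \<gamma>_def)
  have K: "K > 0" using M \<gamma> by (simp add: K_def divide_pos_neg)
  have bound: "eventually (\<lambda>t. \<bar>g' t\<bar> \<le> M * t powr \<beta>) at_top"
    using bnd eventually_gt_at_top[of "0::real"]
  proof eventually_elim
    case (elim t)
    show ?case
    proof (cases "g' t = 0")
      case True then show ?thesis using M elim by simp
    next
      case False
      have "\<bar>g' t\<bar> = exp (ln \<bar>g' t\<bar>)" using False by simp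
      also have "\<dots> \<le> exp (\<beta> * ln t + C)" using elim by simp
      also have "\<dots> = M * t powr \<beta>" using elim by (simp add: M_def powr_def exp_add mult.commute)
      finally show ?thesis .
    qed
  qed
  have "eventually (\<lambda>t. DERIV g t :> g' t \<and> \<bar>g' t\<bar> \<le> M * t powr \<beta> \<and> t > 0) at_top"
    using eventually_conj[OF D eventually_conj[OF bound eventually_gt_at_top[of "0::real"]]] .
  then obtain T where T: "\<And>x. x \<ge> T \<Longrightarrow> DERIV g x :> g' x \<and> \<bar>g' x\<bar> \<le> M * x powr \<beta> \<and> x > 0"
    unfolding eventually_at_top_linorder by blast
  have Dp: "DERIV (\<lambda>x. x powr \<gamma>) z :> \<gamma> * z powr \<beta>" if "z > 0" for z
    using has_real_derivative_powr[OF that, of \<gamma>] by (simp add: \<gamma>_def)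
  have mono1: "g x + M * x powr \<gamma> / \<gamma> \<le> g y + M * y powr \<gamma> / \<gamma>" if "T \<le> x" "x \<le> y" for x y
  proof (rule DERIV_nonneg_imp_nondecreasing[OF that(2)])
    fix z assume "x \<le> z" "z \<le> y"
    then have z: "DERIV g z :> g' z" "\<bar>g' z\<bar> \<le> M * z powr \<beta>" "z > 0" using T[of z] that by auto
    have "DERIV (\<lambda>x. g x + M * x powr \<gamma> / \<gamma>) z :> g' z + M * (\<gamma> * z powr \<beta>) / \<gamma>"
      by (intro DERIV_add z DERIV_cdivide DERIV_cmult Dp)
    moreover have "g' z + M * (\<gamma> * z powr \<beta>) / \<gamma> \<ge> 0" using z(2) \<gamma> by simp
    ultimately show "\<exists>d. DERIV (\<lambda>x. g x + M * x powr \<gamma> / \<gamma>) z :> d \<and> d \<ge> 0" by blast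
  qed
  have mono2: "g y - M * y powr \<gamma> / \<gamma> \<le> g x - M * x powr \<gamma> / \<gamma>" if "T \<le> x" "x \<le> y" for x y
  proof (rule DERIV_nonpos_imp_nonincreasing[OF that(2)])
    fix z assume "x \<le> z" "z \<le> y"
    then have z: "DERIV g z :> g' z" "\<bar>g' z\<bar> \<le> M * z powr \<beta>" "z > 0" using T[of z] that by auto
    have "DERIV (\<lambda>x. g x - M * x powr \<gamma> / \<gamma>) z :> g' z - M * (\<gamma> * z powr \<beta>) / \<gamma>"
      by (intro DERIV_diff z DERIV_cdivide DERIV_cmult Dp)
    moreover have "g' z - M * (\<gamma> * z powr \<beta>) / \<gamma> \<le> 0" using z(2) \<gamma> by simp
    ultimately show "\<exists>d. DERIV (\<lambda>x. g x - M * x powr \<gamma> / \<gamma>) z :> d \<and> d \<le> 0" by blast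
  qed
  have diff: "\<bar>g y - g x\<bar> \<le> K * x powr \<gamma>" if "T \<le> x" "x \<le> y" for x y
  proof -
    have x0: "x > 0" using T[of x] that by auto
    have y0: "y > 0" using x0 that by simp
    have a: "M * y powr \<gamma> / \<gamma> \<le> 0" using M \<gamma> by (intro divide_nonneg_neg) auto
    have b: "M * x powr \<gamma> / \<gamma> = - (K * x powr \<gamma>)" unfolding K_def using \<gamma> by (simp add: field_simps)
    show ?thesis using mono1[OF that] mono2[OF that] a b by (simp add: abs_le_iff)
  qed
  define B where "B = \<bar>g T\<bar> + K * T powr \<gamma>"
  have gB: "\<bar>g y\<bar> \<le> B" if "T \<le> y" for y
    using diff[of T y] that unfolding B_def by auto
  from H_lim[OF H gH] show ?thesis
  proof (elim disjE)
    assume "filterlim g at_top at_top"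
    then have "eventually (\<lambda>y. B + 1 \<le> g y) at_top" unfolding filterlim_at_top by blast
    moreover have "eventually (\<lambda>y. T \<le> y) at_top" by (rule eventually_ge_at_top)
    ultimately have "eventually (\<lambda>y::real. False) at_top"
      by eventually_elim (use gB in force)
    then show ?thesis by simp
  next
    assume "filterlim g at_bot at_top"
    then have "eventually (\<lambda>y. g y \<le> - B - 1) at_top" unfolding filterlim_at_bot by blast
    moreover have "eventually (\<lambda>y. T \<le> y) at_top" by (rule eventually_ge_at_top)
    ultimately have "eventually (\<lambda>y::real. False) at_top"
      by eventually_elim (use gB in force)
    then show ?thesis by simp
  next
    assume "\<exists>L. (g \<longlongrightarrow> L) at_top"
    then obtain c where c: "(g \<longlongrightarrow> c) at_top" by blast
    have cb: "\<bar>g x\<bar> \<le> \<bar>c\<bar> + K * x powr \<gamma>" if x: "T \<le> x" for x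
    proof -
      have "((\<lambda>y. \<bar>g y - g x\<bar>) \<longlongrightarrow> \<bar>c - g x\<bar>) at_top"
        by (intro tendsto_rabs tendsto_diff c tendsto_const)
      moreover have "eventually (\<lambda>y. \<bar>g y - g x\<bar> \<le> K * x powr \<gamma>) at_top"
        using eventually_ge_at_top[of x] by eventually_elim (use diff x in auto)
      ultimately have "\<bar>c - g x\<bar> \<le> K * x powr \<gamma>"
        by (intro tendsto_upperbound) auto
      then show ?thesis by linarith
    qed
    have "c \<noteq> 0"
    proof
      assume c0: "c = 0"
      have e: "- \<gamma> / 2 > 0" using \<gamma> by simp
      have "eventually (\<lambda>t. (- \<gamma> / 2) * ln t \<le> ln K) at_top"
        using pw_low[OF pw0 e] nz eventually_ge_at_top[of T] eventually_gt_at_top[of "0::real"]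
      proof eventually_elim
        case (elim t)
        have "\<bar>g t\<bar> \<le> K * t powr \<gamma>" using cb[OF elim(3)] c0 by simp
        then have "ln \<bar>g t\<bar> \<le> ln (K * t powr \<gamma>)" using elim(2) by simp
        also have "\<dots> = ln K + \<gamma> * ln t" using K elim(4) by (simp add: ln_mult)
        finally have "ln \<bar>g t\<bar> \<le> ln K + \<gamma> * ln t" .
        moreover have "(0 - - \<gamma> / 2) * ln t = - ((- \<gamma> / 2) * ln t)" by simp
        moreover have "\<gamma> * ln t = - 2 * ((- \<gamma> / 2) * ln t)" by simp
        ultimately show ?case using elim(1) by linarith
      qed
      then show False by (rule ev_ln_contra[OF e])
    qed
    then show ?thesis using c by blast
  qed
qed


lemma main_pw:
  assumes H: "good_hardy_field H" and fH: "f \<in> H" and snp: "strongly_non_polynomial f"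
    and \<delta>: "\<delta> > 0" and growth: "asym_gg f (\<lambda>t. t powr \<delta>)"
  shows "\<exists>a>0. \<forall>j. eventually (\<lambda>t. hderiv j f t \<noteq> 0) at_top \<and> pw (hderiv j f) (a - real j)"
proof -
  from growth obtain C0 where C0: "eventually (\<lambda>t. \<bar>t powr \<delta>\<bar> \<le> C0 * \<bar>f t\<bar>) at_top"
    unfolding asym_gg_def by blast
  have "eventually (\<lambda>t. f t \<noteq> 0 \<and> \<delta> * ln t - ln C0 \<le> ln \<bar>f t\<bar>) at_top"
    using C0 eventually_gt_at_top[of "0::real"]
  proof eventually_elim
    case (elim t)
    have p: "t powr \<delta> > 0" using elim(2) by simp
    have "t powr \<delta> \<le> C0 * \<bar>f t\<bar>" using elim(1) abs_of_pos[OF p] by simp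
    then have "C0 * \<bar>f t\<bar> > 0" using p by linarith
    then have C0p: "C0 > 0" and fp: "\<bar>f t\<bar> > 0" by (auto simp: zero_less_mult_iff)
    have "ln (t powr \<delta>) \<le> ln (C0 * \<bar>f t\<bar>)" using p C0p fp \<open>t powr \<delta> \<le> C0 * \<bar>f t\<bar>\<close> by (subst ln_le_cancel_iff) auto
    also have "ln (C0 * \<bar>f t\<bar>) = ln C0 + ln \<bar>f t\<bar>" by (rule ln_mult_pos) (use C0p fp in auto)
    finally have "\<delta> * ln t \<le> ln C0 + ln \<bar>f t\<bar>" using elim(2) by simp
    then show ?case using fp by auto
  qed
  then have nzf: "eventually (\<lambda>t. f t \<noteq> 0) at_top"
    and b1: "eventually (\<lambda>t. \<delta> * ln t - ln C0 \<le> ln \<bar>f t\<bar>) at_top"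
    by (auto elim: eventually_mono)
  from snp obtain d where d2: "asym_less f (\<lambda>t. t ^ (d + 1))"
    unfolding strongly_non_polynomial_def by blast
  have b2: "eventually (\<lambda>t. ln \<bar>f t\<bar> \<le> real (d + 1) * ln t + 0) at_top"
    using ev_abs_lt[OF d2[unfolded asym_less_def], of 1, simplified] eventually_gt_at_top[of "1::real"]
  proof eventually_elim
    case (elim t)
    have tp: "t ^ (d + 1) > 0" using elim(2) by simp
    show ?case
    proof (cases "f t = 0")
      case True then show ?thesis using elim(2) by simp
    next
      case False
      have "\<bar>f t\<bar> / t ^ (d + 1) < 1" using elim(1) tp by (simp add: abs_divide)
      then have "\<bar>f t\<bar> < t ^ (d + 1)" using tp by (simp add: divide_less_eq)
      then have "ln \<bar>f t\<bar> < ln (t ^ (d + 1))" using False by simp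
      then show ?thesis by (simp only: ln_realpow)
    qed
  qed
  obtain a where a: "a > 0" "pw f a"
  proof -
    from q_trich[OF H fH nzf] show thesis
    proof (elim disjE)
      assume "\<exists>L. ((\<lambda>t. t * deriv f t / f t) \<longlongrightarrow> L) at_top \<and> pw f L"
      then obtain L where L: "pw f L" by blast
      have "L > 0"
      proof (rule ccontr)
        assume "\<not> L > 0"
        have e: "\<delta> / 2 > 0" using \<delta> by simp
        show False using bounds_contra[OF b1 pw_up[OF L e]] \<delta> \<open>\<not> L > 0\<close> by simp
      qed
      then show thesis using that L by blast
    next
      assume "\<forall>\<beta>. \<exists>C. eventually (\<lambda>t. \<beta> * ln t - C \<le> ln \<bar>f t\<bar>) at_top"
      then obtain C where "eventually (\<lambda>t. (real (d + 1) + 1) * ln t - C \<le> ln \<bar>f t\<bar>) at_top" by blast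
      from bounds_contra[OF this b2] show thesis by simp
    next
      assume "\<forall>\<beta>. \<exists>C. eventually (\<lambda>t. ln \<bar>f t\<bar> \<le> \<beta> * ln t + C) at_top"
      then obtain C where "eventually (\<lambda>t. ln \<bar>f t\<bar> \<le> (\<delta> / 2) * ln t + C) at_top" by blast
      from bounds_contra[OF b1 this] \<delta> show thesis by simp
    qed
  qed
  have P: "eventually (\<lambda>t. hderiv j f t \<noteq> 0) at_top \<and> pw (hderiv j f) (a - real j)" for j
  proof (induction j)
    case 0 then show ?case using nzf a by (simp add: hderiv_0)
  next
    case (Suc j)
    define h where "h = hderiv j f"
    have nzh: "eventually (\<lambda>t. h t \<noteq> 0) at_top" and pwh: "pw h (a - real j)"
      using Suc.IH unfolding h_def by auto
    have hH: "h \<in> H" unfolding h_def by (rule H_hderiv[OF H fH])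
    have Dh: "eventually (\<lambda>x. DERIV h x :> hderiv (Suc j) f x) at_top"
      unfolding h_def by (rule hderiv_DERIV[OF H fH])
    have dh: "deriv h = hderiv (Suc j) f" unfolding h_def by (simp add: hderiv_Suc)
    define q where "q = (\<lambda>t. t * hderiv (Suc j) f t / h t)"
    from q_trich[OF H hH nzh] show ?case
    proof (elim disjE)
      assume "\<forall>\<beta>. \<exists>C. eventually (\<lambda>t. \<beta> * ln t - C \<le> ln \<bar>h t\<bar>) at_top"
      then obtain C where "eventually (\<lambda>t. (a - real j + 1) * ln t - C \<le> ln \<bar>h t\<bar>) at_top" by blast
      from bounds_contra[OF this pw_up[OF pwh, of "1/2"]] show ?case by simp
    next
      assume "\<forall>\<beta>. \<exists>C. eventually (\<lambda>t. ln \<bar>h t\<bar> \<le> \<beta> * ln t + C) at_top"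
      then obtain C where "eventually (\<lambda>t. ln \<bar>h t\<bar> \<le> (a - real j - 1) * ln t + C) at_top" by blast
      from bounds_contra[OF pw_low[OF pwh, of "1/2"] this] show ?case by simp
    next
      assume "\<exists>L. ((\<lambda>t. t * deriv h t / h t) \<longlongrightarrow> L) at_top \<and> pw h L"
      then obtain L where qL: "((\<lambda>t. t * deriv h t / h t) \<longlongrightarrow> L) at_top" and pwL: "pw h L" by blast
      have "L = a - real j" using pw_unique[OF pwL pwh] .
      with qL have ql: "(q \<longlongrightarrow> a - real j) at_top" unfolding q_def dh by simp
      have eq: "eventually (\<lambda>t. q t * h t / t = hderiv (Suc j) f t) at_top"
        using nzh eventually_gt_at_top[of "0::real"] by eventually_elim (simp add: q_def)
      show ?case
      proof (cases "a - real j = 0")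
        case False
        have pwq: "pw q 0" by (rule pw_lim_nz[OF ql False])
        have nzq: "eventually (\<lambda>t. q t \<noteq> 0) at_top" by (rule tendsto_imp_eventually_ne[OF ql False])
        have nzqh: "eventually (\<lambda>t. q t * h t \<noteq> 0) at_top"
          using nzq nzh by eventually_elim simp
        have nzt: "eventually (\<lambda>t::real. t \<noteq> 0) at_top"
          using eventually_gt_at_top[of "0::real"] by eventually_elim simp
        have "pw (\<lambda>t. q t * h t / t) (0 + (a - real j) - 1)"
          by (rule pw_divide[OF pw_mult[OF pwq pwh nzq nzh] pw_id nzqh nzt])
        then have "pw (hderiv (Suc j) f) (0 + (a - real j) - 1)" by (rule pw_cong[OF eq])
        moreover have "0 + (a - real j) - 1 = a - real (Suc j)" by simp
        moreover have "eventually (\<lambda>t. hderiv (Suc j) f t \<noteq> 0) at_top"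
          using eq nzqh nzt by eventually_elim (metis divide_eq_0_iff mult_eq_0_iff)
        ultimately show ?thesis by (simp add: algebra_simps)
      next
        case True
        note aj = True
        define F' where "F' = hderiv (Suc j) f"
        have F'H: "F' \<in> H" unfolding F'_def by (rule H_hderiv[OF H fH])
        have pw0: "pw h 0" using pwh aj by simp
        have noconst: False if "(h \<longlongrightarrow> c) at_top" "c \<noteq> 0" for c
          using NP[OF H fH snp that(2)] that(1) unfolding h_def by blast
        have nobad: False if "\<beta> < -1" "eventually (\<lambda>t. ln \<bar>F' t\<bar> \<le> \<beta> * ln t + C) at_top" for \<beta> C
          using BAD[OF H hH Dh[folded F'_def] that pw0 nzh] noconst by blast
        from H_zero_or[OF H F'H] show ?thesis
        proof (elim disjE conjE)
          assume z: "eventually (\<lambda>x. F' x = 0) at_top"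
          have "eventually (\<lambda>x. F' x = 0 \<and> DERIV h x :> F' x \<and> h x \<noteq> 0) at_top"
            using eventually_conj[OF z eventually_conj[OF Dh[folded F'_def] nzh]] .
          then obtain T where T: "\<And>x. x \<ge> T \<Longrightarrow> F' x = 0 \<and> DERIV h x :> F' x \<and> h x \<noteq> 0"
            unfolding eventually_at_top_linorder by blast
          have "h x = h T" if "x \<ge> T" for x
          proof -
            have "h T \<le> h x"
            proof (rule DERIV_nonneg_imp_nondecreasing[OF that])
              fix z assume "T \<le> z" "z \<le> x"
              then show "\<exists>y. DERIV h z :> y \<and> y \<ge> 0" using T[of z] by auto
            qed
            moreover have "h x \<le> h T"
            proof (rule DERIV_nonpos_imp_nonincreasing[OF that])
              fix z assume "T \<le> z" "z \<le> x"
              then show "\<exists>y. DERIV h z :> y \<and> y \<le> 0" using T[of z] by auto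
            qed
            ultimately show ?thesis by simp
          qed
          then have "eventually (\<lambda>x. h x = h T) at_top"
            unfolding eventually_at_top_linorder by blast
          then have "(h \<longlongrightarrow> h T) at_top" by (rule tendsto_eventually)
          moreover have "h T \<noteq> 0" using T[of T] by simp
          ultimately show ?thesis using noconst by blast
        next
          assume nzF: "eventually (\<lambda>x. F' x \<noteq> 0) at_top"
          have up: "eventually (\<lambda>t. ln \<bar>F' t\<bar> \<le> (-1 + e) * ln t + 0) at_top" if e: "e > 0" for e
          proof -
            have "(q \<longlongrightarrow> 0) at_top" using ql aj by simp
            from ev_abs_lt[OF this, of 1]
            have q1: "eventually (\<lambda>t. \<bar>q t\<bar> < 1) at_top" by simp
            show ?thesis
              using pwD[OF pw0 e] q1 nzh nzF eq eventually_gt_at_top[of "1::real"]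
            proof eventually_elim
              case (elim t)
              have t0: "t > 0" using elim by simp
              have F'eq: "F' t = q t * h t / t" using elim(5) unfolding F'_def by simp
              have q0: "q t \<noteq> 0" using elim(4) F'eq by auto
              have "ln \<bar>F' t\<bar> = ln (\<bar>q t\<bar> * \<bar>h t\<bar>) - ln t"
                using F'eq t0 q0 elim(3) by (simp add: abs_mult abs_divide ln_div)
              also have "\<dots> = ln \<bar>q t\<bar> + ln \<bar>h t\<bar> - ln t"
                using q0 elim(3) by (simp add: ln_mult_pos)
              finally have l: "ln \<bar>F' t\<bar> = ln \<bar>q t\<bar> + ln \<bar>h t\<bar> - ln t" .
              have "ln \<bar>q t\<bar> \<le> 0" using elim(2) q0 by simp
              moreover have "ln \<bar>h t\<bar> \<le> e * ln t" using elim(1) by simp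
              moreover have "(-1 + e) * ln t = e * ln t - ln t" by (simp add: algebra_simps)
              ultimately show ?case using l by linarith
            qed
          qed
          from q_trich[OF H F'H nzF] show ?thesis
          proof (elim disjE)
            assume "\<forall>\<beta>. \<exists>C. eventually (\<lambda>t. \<beta> * ln t - C \<le> ln \<bar>F' t\<bar>) at_top"
            then obtain C where "eventually (\<lambda>t. 0 * ln t - C \<le> ln \<bar>F' t\<bar>) at_top" by blast
            from bounds_contra[OF this up[of "1/2"]] show ?thesis by simp
          next
            assume "\<forall>\<beta>. \<exists>C. eventually (\<lambda>t. ln \<bar>F' t\<bar> \<le> \<beta> * ln t + C) at_top"
            then obtain C where "eventually (\<lambda>t. ln \<bar>F' t\<bar> \<le> (-2) * ln t + C) at_top" by blast
            from nobad[OF _ this] show ?thesis by simp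
          next
            assume "\<exists>L. ((\<lambda>t. t * deriv F' t / F' t) \<longlongrightarrow> L) at_top \<and> pw F' L"
            then obtain L' where pwL': "pw F' L'" by blast
            consider "L' = -1" | "L' > -1" | "L' < -1" by linarith
            then show ?thesis
            proof cases
              case 1
              have "a - real (Suc j) = -1" using aj by simp
              then show ?thesis using pwL' nzF 1 unfolding F'_def by simp
            next
              case 2
              have e1: "(L' + 1) / 2 > 0" and e2: "(L' + 1) / 4 > 0" using 2 by simp_all
              have "L' - (L' + 1) / 2 > -1 + (L' + 1) / 4" using 2 by (simp add: field_simps)
              from bounds_contra[OF pw_low[OF pwL' e1] up[OF e2] this] show ?thesis ..
            next
              case 3
              have e: "(- 1 - L') / 2 > 0" using 3 by simp
              have "L' + (- 1 - L') / 2 < -1" using 3 by (simp add: field_simps)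
              from nobad[OF this pw_up[OF pwL' e]] show ?thesis ..
            qed
          qed
        qed
      qed
    qed
  qed
  then show ?thesis using a(1) by blast
qed


lemma inf_not_zero:
  fixes g :: "real \<Rightarrow> real"
  assumes "filterlim (\<lambda>t. \<bar>g t\<bar>) at_top at_top" "(g \<longlongrightarrow> 0) at_top" shows False
proof -
  have "eventually (\<lambda>t. 1 \<le> \<bar>g t\<bar>) at_top" using assms(1) unfolding filterlim_at_top by blast
  moreover have "eventually (\<lambda>t. \<bar>g t\<bar> < 1) at_top" using ev_abs_lt[OF assms(2), of 1] by simp
  ultimately have "eventually (\<lambda>t::real. False) at_top" by eventually_elim simp
  then show False by simp
qed

lemma exp_eq: "real m > 0 \<Longrightarrow> c - (-1 / real m) * (a - real m) = c - 1 + a / real m"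
  by (simp add: field_simps)

theorem lemmaA3:
  fixes H :: "(real \<Rightarrow> real) set" and f :: "real \<Rightarrow> real" and \<delta> :: real
  assumes H: "good_hardy_field H"
    and fH: "f \<in> H"
    and snp: "strongly_non_polynomial f"
    and \<delta>: "\<delta> > 0"
    and growth: "asym_gg f (\<lambda>t. t powr \<delta>)"
  shows "(\<exists>K. \<forall>k\<ge>K. S_class H f k \<noteq> {})
    \<and> (\<exists>c1<1. \<forall>c. c1 < c \<and> c < 1 \<longrightarrow>
          (\<exists>k0. ((hderiv k0 f) \<longlongrightarrow> 0) at_top \<and> (\<lambda>t. t powr c) \<in> S_class H f k0))
    \<and> (\<forall>k. ((hderiv k f) \<longlongrightarrow> 0) at_top \<longrightarrow>
          \<not> (\<exists>c0<1. \<forall>c. c0 < c \<and> c < 1 \<longrightarrow> (\<lambda>t. t powr c) \<in> S_class H f k))"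
proof -
  obtain a where a: "a > 0" and P: "\<And>j. eventually (\<lambda>t. hderiv j f t \<noteq> 0) at_top \<and> pw (hderiv j f) (a - real j)"
    using main_pw[OF H fH snp \<delta> growth] by blast
  define u where "u = (\<lambda>k t. \<bar>hderiv k f t\<bar> powr (-1 / real k))"
  have nzF: "eventually (\<lambda>t. hderiv j f t \<noteq> 0) at_top" for j using P by blast
  have pwF: "pw (hderiv j f) (a - real j)" for j using P by blast
  have pwu: "pw (u k) ((-1 / real k) * (a - real k))" for k
    unfolding u_def by (rule pw_powr_abs[OF pwF])
  have nzu: "eventually (\<lambda>t. u k t \<noteq> 0) at_top" for k
    using nzF[of k] by eventually_elim (simp add: u_def)
  have lim0: "(hderiv k f \<longlongrightarrow> 0) at_top" if "real k > a" for k
    using pw_to_zero[OF pwF[of k]] that by simp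
  have uH: "u k \<in> H" if "real k > a" for k
    unfolding u_def by (rule H_abs_powr[OF H H_hderiv[OF H fH] nzF lim0[OF that]])
  have nzt: "eventually (\<lambda>t. t powr c \<noteq> 0) at_top" for c :: real
    using eventually_gt_at_top[of "0::real"] by eventually_elim simp
  have mem: "g \<in> S_class H f k" if "g \<in> H" "asym_leq (u k) g" "asym_less g (u (k + 1))" for g k
    using that by (simp add: S_class_def u_def)
  have pwr: "pw (\<lambda>t. t powr c / u k t) (c - 1 + a / real k)" if "real k > 0" for c k
  proof -
    have "pw (\<lambda>t. t powr c / u k t) (c - (-1 / real k) * (a - real k))"
      by (rule pw_divide[OF pw_tpowr pwu nzt nzu])
    then show ?thesis by (simp only: exp_eq[OF that])
  qed
  have leq: "asym_leq (u k) (\<lambda>t. t powr c)" if "real k > 0" "c - 1 + a / real k > 0" for c k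
    unfolding asym_leq_def using pw_to_inf[OF pwr[OF that(1)] that(2)] by blast
  have less: "asym_less (\<lambda>t. t powr c) (u k)" if "real k > 0" "c - 1 + a / real k < 0" for c k
    unfolding asym_less_def using pw_to_zero[OF pwr[OF that(1)] that(2)] .
  have part1: "\<exists>K. \<forall>k\<ge>K. S_class H f k \<noteq> {}"
  proof (intro exI allI impI)
    fix k assume k: "k \<ge> nat \<lceil>a\<rceil> + 1"
    have ka: "real k > a"
    proof -
      have "real k \<ge> real (nat \<lceil>a\<rceil>) + 1" using k by simp
      moreover have "real (nat \<lceil>a\<rceil>) \<ge> a" using a by linarith
      ultimately show ?thesis by linarith
    qed
    have k0: "real k > 0" using ka a by linarith
    have "asym_leq (u k) (u k)"
    proof -
      have "eventually (\<lambda>t. \<bar>u k t / u k t\<bar> = 1) at_top"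
        using nzu[of k] by eventually_elim simp
      then have "((\<lambda>t. \<bar>u k t / u k t\<bar>) \<longlongrightarrow> 1) at_top" by (rule tendsto_eventually)
      then show ?thesis unfolding asym_leq_def by (intro disjI1 exI[of _ 1]) simp
    qed
    moreover have "asym_less (u k) (u (k + 1))"
    proof -
      have "pw (\<lambda>t. u k t / u (k + 1) t) ((-1 / real k) * (a - real k) - (-1 / real (k + 1)) * (a - real (k + 1)))"
        by (rule pw_divide[OF pwu pwu nzu nzu])
      moreover have "(-1 / real k) * (a - real k) - (-1 / real (k + 1)) * (a - real (k + 1))
          = - a / (real k * (real k + 1))"
        using k0 by (simp add: field_simps)
      moreover have "- a / (real k * (real k + 1)) < 0" using a k0 by (simp add: divide_neg_pos)
      ultimately show ?thesis unfolding asym_less_def using pw_to_zero by metis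
    qed
    ultimately have "u k \<in> S_class H f k" using mem uH[OF ka] by blast
    then show "S_class H f k \<noteq> {}" by blast
  qed
  have part2: "\<exists>c1<1. \<forall>c. c1 < c \<and> c < 1 \<longrightarrow>
          (\<exists>k0. ((hderiv k0 f) \<longlongrightarrow> 0) at_top \<and> (\<lambda>t. t powr c) \<in> S_class H f k0)"
  proof (intro exI[of _ "1 / (a + 1)"] conjI allI impI)
    show "1 / (a + 1) < 1" using a by simp
    fix c assume c: "1 / (a + 1) < c \<and> c < 1"
    define N where "N = a / (1 - c)"
    have c1: "1 - c > 0" using c by simp
    have "(a + 1) * c > 1" using c a by (simp add: divide_less_eq mult.commute)
    then have "(a + 1) * (1 - c) < a" by (simp add: algebra_simps)
    then have Na: "N > a + 1" unfolding N_def using c1 by (simp add: less_divide_eq mult.commute)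
    define k where "k = nat \<lceil>N\<rceil> - 1"
    have ceil: "\<lceil>N\<rceil> \<ge> 2" using Na a by linarith
    have n1: "nat \<lceil>N\<rceil> \<ge> 1" using ceil by linarith
    have n2: "real (nat \<lceil>N\<rceil>) = real_of_int \<lceil>N\<rceil>" using ceil by simp
    have kr: "real k = real_of_int \<lceil>N\<rceil> - 1" unfolding k_def using n1 n2 by (simp add: of_nat_diff)
    have kN: "real k < N" using kr by linarith
    have Nk: "N \<le> real k + 1" using kr by linarith
    have ka: "real k > a" using kr Na by linarith
    have k0: "real k > 0" using ka a by linarith
    have ck: "c - 1 + a / real k > 0"
    proof -
      have "real k * (1 - c) < a" using kN c1 unfolding N_def by (simp add: less_divide_eq)
      then have "1 - c < a / real k" using k0 by (simp add: less_divide_eq mult.commute)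
      then show ?thesis by simp
    qed
    have ck1: "c - 1 + a / (real k + 1) \<le> 0"
    proof -
      have "a \<le> (real k + 1) * (1 - c)" using Nk c1 unfolding N_def by (simp add: divide_le_eq)
      then have "a / (real k + 1) \<le> 1 - c" using k0 by (simp add: divide_le_eq mult.commute)
      then show ?thesis by linarith
    qed
    have ck2: "c - 1 + a / real (k + 1 + 1) < 0"
    proof -
      have "a / (real k + 2) < a / (real k + 1)" using a k0 by (intro divide_strict_left_mono) auto
      moreover have eq: "real (k + 1 + 1) = real k + 2" by simp
      ultimately show ?thesis unfolding eq using ck1 by linarith
    qed
    define \<rho> where "\<rho> = (\<lambda>t. t powr c / u (k + 1) t)"
    show "\<exists>k0. ((hderiv k0 f) \<longlongrightarrow> 0) at_top \<and> (\<lambda>t. t powr c) \<in> S_class H f k0"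
    proof (cases "(\<rho> \<longlongrightarrow> 0) at_top")
      case True
      have "(\<lambda>t. t powr c) \<in> S_class H f k"
        using mem[OF H_powr[OF H] leq[OF k0 ck]] True unfolding asym_less_def \<rho>_def by blast
      then show ?thesis using lim0[OF ka] by blast
    next
      case False
      have ka1: "real (k + 1) > a" using ka by simp
      have k10: "real (k + 1) > 0" using k0 by simp
      have k20: "real (k + 1 + 1) > 0" using k0 by simp
      have \<rho>H: "\<rho> \<in> H" unfolding \<rho>_def by (rule H_divide[OF H H_powr[OF H] uH[OF ka1] nzu])
      have "asym_leq (u (k + 1)) (\<lambda>t. t powr c)"
        using H_lim[OF H \<rho>H]
      proof (elim disjE)
        assume "\<exists>L. (\<rho> \<longlongrightarrow> L) at_top"
        then obtain L where L: "(\<rho> \<longlongrightarrow> L) at_top" by blast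
        then have "L \<noteq> 0" using False by auto
        moreover have "((\<lambda>t. \<bar>\<rho> t\<bar>) \<longlongrightarrow> \<bar>L\<bar>) at_top" by (rule tendsto_rabs[OF L])
        ultimately show ?thesis unfolding asym_leq_def \<rho>_def
          by (intro disjI1 exI[of _ "\<bar>L\<bar>"] conjI) auto
      next
        assume "filterlim \<rho> at_top at_top"
        then have "filterlim (\<lambda>t. \<bar>\<rho> t\<bar>) at_top at_top"
          by (rule filterlim_at_top_mono) (intro always_eventually allI abs_ge_self)
        then show ?thesis unfolding asym_leq_def \<rho>_def by blast
      next
        assume "filterlim \<rho> at_bot at_top"
        then have "filterlim (\<lambda>t. - \<rho> t) at_top at_top"
          using filterlim_uminus_at_bot by blast
        then have "filterlim (\<lambda>t. \<bar>\<rho> t\<bar>) at_top at_top"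
          by (rule filterlim_at_top_mono) (intro always_eventually allI abs_ge_minus_self)
        then show ?thesis unfolding asym_leq_def \<rho>_def by blast
      qed
      moreover have "asym_less (\<lambda>t. t powr c) (u (k + 1 + 1))" by (rule less[OF k20 ck2])
      ultimately have "(\<lambda>t. t powr c) \<in> S_class H f (k + 1)" using mem[OF H_powr[OF H]] by blast
      then show ?thesis using lim0[OF ka1] by blast
    qed
  qed
  have part3: "\<forall>k. ((hderiv k f) \<longlongrightarrow> 0) at_top \<longrightarrow>
          \<not> (\<exists>c0<1. \<forall>c. c0 < c \<and> c < 1 \<longrightarrow> (\<lambda>t. t powr c) \<in> S_class H f k)"
  proof (intro allI impI notI)
    fix k assume "(hderiv k f \<longlongrightarrow> 0) at_top"
    assume "\<exists>c0<1. \<forall>c. c0 < c \<and> c < 1 \<longrightarrow> (\<lambda>t. t powr c) \<in> S_class H f k"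
    then obtain c0 where c0: "c0 < 1" and S: "\<And>c. c0 < c \<Longrightarrow> c < 1 \<Longrightarrow> (\<lambda>t. t powr c) \<in> S_class H f k"
      by blast
    define m where "m = max c0 (1 - a / (2 * real (k + 1)))"
    have m1: "m < 1" unfolding m_def using c0 a by (auto simp: divide_pos_pos)
    define c where "c = (m + 1) / 2"
    have cc0: "c0 < c" and cc1: "c < 1" using m1 unfolding c_def m_def by auto
    have mge: "m \<ge> 1 - a / (2 * real (k + 1))" unfolding m_def by (rule max.cobounded2)
    have "c > m" using m1 unfolding c_def by simp
    then have cm: "c > 1 - a / (2 * real (k + 1))" using mge by linarith
    have k10: "real (k + 1) > 0" by simp
    have ex: "c - 1 + a / real (k + 1) > 0"
    proof -
      have "a / (2 * real (k + 1)) < a / real (k + 1)" using a by (intro divide_strict_left_mono) auto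
      then show ?thesis using cm by linarith
    qed
    have "(\<lambda>t. t powr c) \<in> S_class H f k" by (rule S[OF cc0 cc1])
    then have "asym_less (\<lambda>t. t powr c) (u (k + 1))" by (simp add: S_class_def u_def)
    then have "((\<lambda>t. t powr c / u (k + 1) t) \<longlongrightarrow> 0) at_top" unfolding asym_less_def .
    moreover have "filterlim (\<lambda>t. \<bar>t powr c / u (k + 1) t\<bar>) at_top at_top"
      by (rule pw_to_inf[OF pwr[OF k10] ex])
    ultimately show False using inf_not_zero[where g="\<lambda>t. t powr c / u (k + 1) t"] by blast
  qed
  show ?thesis using part1 part2 part3 by blast
qed

end
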